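(* Let $X$ be a real Banach space and $D\subset X$ dense. Then: (1) $X$ is LOH if and only if for every $\varepsilon>0$ and $x\in D$ there exists $y\in D$ with $\|y\|\ne0$, $\big\|\|y\|x-\|x\|y\big\|>\|y\|(2\|x\|-\varepsilon)$ and $\big\|\|y\|x+\|x\|y\big\|>\|y\|(2\|x\|-\varepsilon)$; (2) $X$ is OH if and only if for every $\varepsilon>0$, $n\in\mathbb{N}$ and $x=(x_1,\dots,x_n)\in D^n$ there exists $y\in D$ with $\|y\|\ne0$ and $\big\|\|y\|x_i+\|x_i\|y\big\|>\|y\|(2\|x_i\|-\varepsilon)$ for all $i=1,\dots,n$.
   Context: $X$ is locally octahedral (LOH) if for every $\varepsilon>0$ and $x\in X$ there is $y\in S_X$ with $\|tx+y\|\ge(1-\varepsilon)(|t|\|x\|+\|y\|)$ for all $t\in\mathbb{R}$. $X$ is octahedral (OH) if for every finite-dimensional subspace $E\subset X$ and $\varepsilon>0$ there is $y\in S_X$ with $\|x+y\|\ge(1-\varepsilon)(\|x\|+\|y\|)$ for all $x\in E$. *)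

theory Defs
  imports "HOL-Analysis.Analysis"
begin

definition LOH :: "'a::real_normed_vector itself \<Rightarrow> bool" where
  "LOH _ \<longleftrightarrow> (\<forall>\<epsilon>>0. \<forall>x::'a. \<exists>y::'a. norm y = 1 \<and>
     (\<forall>t::real. norm (t *\<^sub>R x + y) \<ge> (1 - \<epsilon>) * (\<bar>t\<bar> * norm x + norm y)))"

definition OH :: "'a::real_normed_vector itself \<Rightarrow> bool" where
  "OH _ \<longleftrightarrow> (\<forall>E::'a set. \<forall>\<epsilon>>0. (subspace E \<and> (\<exists>B. finite B \<and> E = span B)) \<longrightarrow>
     (\<exists>y::'a. norm y = 1 \<and> (\<forall>x\<in>E. norm (x + y) \<ge> (1 - \<epsilon>) * (norm x + norm y))))"

end

theory Submission
  imports Defs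
begin


lemma fd_compact:
  fixes B :: "'a::real_normed_vector set"
  assumes "finite B"
  shows "compact (span B \<inter> cball 0 r)"
  using assms
proof (induction B arbitrary: r rule: finite_induct)
  case empty
  have "span ({}::'a set) \<inter> cball 0 r \<subseteq> {0}" by auto
  then have "finite (span ({}::'a set) \<inter> cball 0 r)" using finite_subset by blast
  then show ?case using finite_imp_compact by blast
next
  case (insert b B)
  show ?case
  proof (cases "b \<in> span B")
    case True
    then show ?thesis using insert.IH span_redundant by metis
  next
    case False
    then have b0: "b \<noteq> 0" using span_zero by metis
    define K where "K = span B \<inter> cball 0 (2 * norm b)"
    have "compact K" unfolding K_def using insert.IH by blast
    then have "open (- K)" using compact_imp_closed by blast
    moreover have "b \<in> - K" unfolding K_def using False by auto
    ultimately obtain \<eta>0 where \<eta>0: "\<eta>0 > 0" "ball b \<eta>0 \<subseteq> - K"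
      using open_contains_ball by blast
    define \<eta> where "\<eta> = min \<eta>0 (norm b)"
    have \<eta>pos: "\<eta> > 0" unfolding \<eta>_def using \<eta>0 b0 by simp
    have dist: "norm (b - z) \<ge> \<eta>" if "z \<in> span B" for z
    proof (rule ccontr)
      assume "\<not> ?thesis"
      then have l: "norm (b - z) < \<eta>0" "norm (b - z) < norm b" unfolding \<eta>_def by auto
      have "norm z \<le> norm b + norm (b - z)" using norm_triangle_sub[of z b] by (simp add: norm_minus_commute)
      then have "z \<in> K" unfolding K_def using that l by auto
      moreover have "z \<in> ball b \<eta>0" using l by (simp add: dist_norm)
      ultimately show False using \<eta>0 by auto
    qed
    have low: "norm (z + t *\<^sub>R b) \<ge> \<bar>t\<bar> * \<eta>" if "z \<in> span B" for z t
    proof (cases "t = 0")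
      case True then show ?thesis by simp
    next
      case False
      have "z + t *\<^sub>R b = t *\<^sub>R (b - (- (1/t) *\<^sub>R z))" using False by (simp add: algebra_simps)
      then have "norm (z + t *\<^sub>R b) = \<bar>t\<bar> * norm (b - (- (1/t) *\<^sub>R z))" by simp
      moreover have "(- (1/t) *\<^sub>R z) \<in> span B" using that by (simp add: span_scale span_neg)
      ultimately show ?thesis using dist[of "- (1/t) *\<^sub>R z"] by (simp add: mult_left_mono)
    qed
    define T where "T = r / \<eta>"
    define R where "R = r + T * norm b"
    define g where "g = (\<lambda>p::'a \<times> real. fst p + snd p *\<^sub>R b)"
    have sub: "span (insert b B) \<inter> cball 0 r \<subseteq> g ` ((span B \<inter> cball 0 R) \<times> {-T..T})"
    proof
      fix w assume w: "w \<in> span (insert b B) \<inter> cball 0 r"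
      then obtain k where k: "w - k *\<^sub>R b \<in> span B" using span_insert[of b B] by auto
      define z where "z = w - k *\<^sub>R b"
      have wz: "w = z + k *\<^sub>R b" unfolding z_def by simp
      have nw: "norm w \<le> r" using w by simp
      have zs: "z \<in> span B" using k unfolding z_def .
      have "\<bar>k\<bar> * \<eta> \<le> norm w" using low[OF zs, of k] unfolding wz .
      then have "\<bar>k\<bar> * \<eta> \<le> r" using nw by linarith
      then have kT: "\<bar>k\<bar> \<le> T" unfolding T_def using \<eta>pos by (simp add: field_simps)
      have "norm z \<le> norm w + norm (k *\<^sub>R b)" unfolding z_def using norm_triangle_ineq4 by blast
      also have "\<dots> \<le> r + T * norm b" using nw kT using mult_right_mono[OF kT norm_ge_zero[of b]] by simp
      finally have "norm z \<le> R" unfolding R_def .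
      then have "(z, k) \<in> (span B \<inter> cball 0 R) \<times> {-T..T}" using zs kT by auto
      moreover have "w = g (z, k)" unfolding g_def using wz by simp
      ultimately show "w \<in> g ` ((span B \<inter> cball 0 R) \<times> {-T..T})" by blast
    qed
    have sub2: "g ` ((span B \<inter> cball 0 R) \<times> {-T..T}) \<subseteq> span (insert b B)"
    proof
      fix w assume "w \<in> g ` ((span B \<inter> cball 0 R) \<times> {-T..T})"
      then obtain z k where "z \<in> span B" "w = z + k *\<^sub>R b" unfolding g_def by force
      then show "w \<in> span (insert b B)"
        by (meson insertI1 span_add span_base span_mono span_scale subset_insertI subsetD)
    qed
    have cg: "continuous_on UNIV g" unfolding g_def by (intro continuous_intros)
    have "compact ((span B \<inter> cball 0 R) \<times> {-T..T})"
      using insert.IH compact_Times compact_Icc by blast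
    then have "compact (g ` ((span B \<inter> cball 0 R) \<times> {-T..T}))"
      using compact_continuous_image continuous_on_subset[OF cg] by blast
    then have "compact (g ` ((span B \<inter> cball 0 R) \<times> {-T..T}) \<inter> cball 0 r)"
      by (simp add: compact_Int_closed)
    moreover have "g ` ((span B \<inter> cball 0 R) \<times> {-T..T}) \<inter> cball 0 r = span (insert b B) \<inter> cball 0 r"
      using sub sub2 by blast
    ultimately show ?thesis by simp
  qed
qed

lemma dense_hit:
  assumes "closure D = UNIV" "open U" "y \<in> U"
  shows "\<exists>d\<in>D. d \<in> U"
  using open_Int_closure_eq_empty[OF assms(2), of D] assms by auto

lemma dense_near:
  fixes x :: "'a::real_normed_vector"
  assumes "closure D = UNIV" "r > 0"
  shows "\<exists>d\<in>D. norm (x - d) < r"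
proof -
  have "x \<in> ball x r" using assms by simp
  then obtain d where "d \<in> D" "d \<in> ball x r" using dense_hit[OF assms(1) open_ball] by blast
  then show ?thesis by (auto simp: dist_norm)
qed

lemma lowA:
  fixes e v :: "'a::real_normed_vector"
  assumes "norm e = 1" "norm v = 1" "norm (e + v) \<ge> 2 - \<gamma>" "\<gamma> \<ge> 0" "s \<ge> 0"
  shows "norm (s *\<^sub>R e + v) \<ge> (1 - \<gamma>) * (s + 1)"
proof (cases "s \<ge> 1")
  case True
  have "s *\<^sub>R e + v = s *\<^sub>R (e + v) - (s - 1) *\<^sub>R v" by (simp add: algebra_simps)
  then have "norm (s *\<^sub>R e + v) \<ge> norm (s *\<^sub>R (e + v)) - norm ((s - 1) *\<^sub>R v)"
    by (metis norm_triangle_ineq2)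
  moreover have "norm (s *\<^sub>R (e + v)) \<ge> s * (2 - \<gamma>)"
    using assms(3) assms(5) mult_left_mono[of "2 - \<gamma>" "norm (e + v)" s] by simp
  moreover have "norm ((s - 1) *\<^sub>R v) = s - 1" using True assms by simp
  ultimately have "norm (s *\<^sub>R e + v) \<ge> s * (2 - \<gamma>) - (s - 1)" by linarith
  moreover have "s * (2 - \<gamma>) - (s - 1) \<ge> (1 - \<gamma>) * (s + 1)"
    using True assms by (simp add: algebra_simps)
  ultimately show ?thesis by linarith
next
  case False
  have "s *\<^sub>R e + v = (e + v) - (1 - s) *\<^sub>R e" by (simp add: algebra_simps)
  then have "norm (s *\<^sub>R e + v) \<ge> norm (e + v) - norm ((1 - s) *\<^sub>R e)"
    by (metis norm_triangle_ineq2)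
  moreover have "norm ((1 - s) *\<^sub>R e) = 1 - s" using False assms by simp
  ultimately have "norm (s *\<^sub>R e + v) \<ge> 2 - \<gamma> - (1 - s)" using assms by linarith
  moreover have "2 - \<gamma> - (1 - s) \<ge> (1 - \<gamma>) * (s + 1)"
    using False assms by (simp add: algebra_simps)
  ultimately show ?thesis by linarith
qed

lemma pert:
  fixes u e v :: "'a::real_normed_vector"
  assumes "s \<ge> 0"
  shows "norm (s *\<^sub>R u + v) \<ge> norm (s *\<^sub>R e + v) - s * norm (u - e)"
proof -
  have "s *\<^sub>R e + v = (s *\<^sub>R u + v) - s *\<^sub>R (u - e)" by (simp add: algebra_simps)
  then have "norm (s *\<^sub>R e + v) \<le> norm (s *\<^sub>R u + v) + norm (s *\<^sub>R (u - e))"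
    by (metis norm_triangle_ineq4)
  then show ?thesis using assms by simp
qed

lemma normdiff:
  fixes x d :: "'a::real_normed_vector"
  assumes "x \<noteq> 0" "d \<noteq> 0"
  shows "norm ((1 / norm x) *\<^sub>R x - (1 / norm d) *\<^sub>R d) \<le> 2 * norm (x - d) / norm x"
proof -
  have eq: "(1 / norm x) *\<^sub>R x - (1 / norm d) *\<^sub>R d
      = (1 / norm x) *\<^sub>R (x - d) + (1 / norm x - 1 / norm d) *\<^sub>R d"
    by (simp add: algebra_simps)
  have a: "norm ((1 / norm x) *\<^sub>R (x - d)) = norm (x - d) / norm x" by simp
  have "norm ((1 / norm x - 1 / norm d) *\<^sub>R d) = \<bar>1 / norm x - 1 / norm d\<bar> * norm d" by simp
  also have "\<dots> = \<bar>norm d - norm x\<bar> / norm x"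
  proof -
    have "1 / norm x - 1 / norm d = (norm d - norm x) / (norm x * norm d)"
      using assms by (simp add: diff_divide_distrib)
    then have "\<bar>1 / norm x - 1 / norm d\<bar> * norm d = \<bar>norm d - norm x\<bar> / (norm x * norm d) * norm d"
      by simp
    also have "\<dots> = \<bar>norm d - norm x\<bar> / norm x" using assms by simp
    finally show ?thesis .
  qed
  also have "\<dots> \<le> norm (x - d) / norm x"
    using assms norm_triangle_ineq3[of d x] by (simp add: divide_right_mono norm_minus_commute)
  finally have b: "norm ((1 / norm x - 1 / norm d) *\<^sub>R d) \<le> norm (x - d) / norm x" .
  show ?thesis unfolding eq using norm_triangle_ineq[of "(1 / norm x) *\<^sub>R (x - d)" "(1 / norm x - 1 / norm d) *\<^sub>R d"] a b
    by simp
qed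

lemma scaled:
  fixes y d :: "'a::real_normed_vector"
  assumes "y \<noteq> 0" "d \<noteq> 0" "norm (norm y *\<^sub>R d + norm d *\<^sub>R y) > norm y * (2 * norm d - \<epsilon>)"
  shows "norm ((1 / norm d) *\<^sub>R d + (1 / norm y) *\<^sub>R y) > 2 - \<epsilon> / norm d"
proof -
  define N where "N = norm ((1 / norm d) *\<^sub>R d + (1 / norm y) *\<^sub>R y)"
  have "norm y *\<^sub>R d + norm d *\<^sub>R y = (norm y * norm d) *\<^sub>R ((1 / norm d) *\<^sub>R d + (1 / norm y) *\<^sub>R y)"
    using assms by (simp add: algebra_simps)
  then have "norm (norm y *\<^sub>R d + norm d *\<^sub>R y) = norm y * (norm d * N)"
    unfolding N_def by simp
  then have "norm y * (norm d * N) > norm y * (2 * norm d - \<epsilon>)" using assms by simp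
  then have "norm d * N > 2 * norm d - \<epsilon>" using assms by simp
  then have "N > (2 * norm d - \<epsilon>) / norm d" using assms by (simp add: field_simps)
  then show ?thesis unfolding N_def using assms by (simp add: field_simps)
qed



lemma small_lem:
  fixes \<epsilon> a M :: real
  assumes "\<epsilon> > 0" "0 \<le> a" "a \<le> M"
  shows "2 * (\<epsilon> / (2 * (M + 1))) * a < \<epsilon>"
proof -
  have M1: "M + 1 > 0" using assms by linarith
  have "2 * (\<epsilon> / (2 * (M + 1))) * a = \<epsilon> * (a / (M + 1))" using M1 by (simp add: field_simps)
  moreover have "a / (M + 1) < 1" using M1 assms by simp
  ultimately show ?thesis using assms(1) by (metis mult.right_neutral mult_strict_left_mono)
qed

lemma loh_fwd:
  fixes D :: "'a::real_normed_vector set"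
  assumes cl: "closure D = UNIV" and L: "LOH TYPE('a)" and \<epsilon>: "\<epsilon> > 0"
  shows "\<exists>y\<in>D. norm y \<noteq> 0 \<and>
              norm (norm y *\<^sub>R x - norm x *\<^sub>R y) > norm y * (2 * norm x - \<epsilon>) \<and>
              norm (norm y *\<^sub>R x + norm x *\<^sub>R y) > norm y * (2 * norm x - \<epsilon>)"
proof -
  define \<delta> where "\<delta> = \<epsilon> / (2 * (norm x + 1))"
  have \<delta>: "\<delta> > 0" unfolding \<delta>_def using \<epsilon> norm_ge_zero[of x] by (smt (verit) divide_pos_pos)
  obtain y0 where y0: "norm y0 = 1" "\<forall>t. norm (t *\<^sub>R x + y0) \<ge> (1 - \<delta>) * (\<bar>t\<bar> * norm x + norm y0)"
    using L \<delta> unfolding LOH_def by blast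
  define U where "U = {y. norm y \<noteq> 0 \<and>
              norm y * (2 * norm x - \<epsilon>) < norm (norm y *\<^sub>R x - norm x *\<^sub>R y) \<and>
              norm y * (2 * norm x - \<epsilon>) < norm (norm y *\<^sub>R x + norm x *\<^sub>R y)}"
  have oU: "open U" unfolding U_def
    by (intro open_Collect_conj open_Collect_neq open_Collect_less continuous_intros)
  have "y0 \<in> U"
  proof (cases "x = 0")
    case True
    have "y0 \<noteq> 0" using y0(1) by auto
    then show ?thesis unfolding U_def using True \<epsilon> by simp
  next
    case False
    then have nx: "norm x > 0" by simp
    have k: "2 * \<delta> * norm x < \<epsilon>" unfolding \<delta>_def using small_lem[OF \<epsilon>, of "norm x" "norm x"] by simp
    have "x + norm x *\<^sub>R y0 = norm x *\<^sub>R ((1 / norm x) *\<^sub>R x + y0)" using False by (simp add: algebra_simps)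
    then have p: "norm (x + norm x *\<^sub>R y0) = norm x * norm ((1 / norm x) *\<^sub>R x + y0)" by simp
    have "x - norm x *\<^sub>R y0 = - (norm x *\<^sub>R ((- 1 / norm x) *\<^sub>R x + y0))" using False by (simp add: algebra_simps)
    then have m: "norm (x - norm x *\<^sub>R y0) = norm x * norm ((- 1 / norm x) *\<^sub>R x + y0)"
      by simp
    have "norm ((1 / norm x) *\<^sub>R x + y0) \<ge> (1 - \<delta>) * 2"
      using y0 spec[OF y0(2), of "1 / norm x"] nx by simp
    then have pp: "norm x * norm ((1 / norm x) *\<^sub>R x + y0) \<ge> norm x * ((1 - \<delta>) * 2)"
      by (rule mult_left_mono) (use nx in simp)
    have "norm ((- 1 / norm x) *\<^sub>R x + y0) \<ge> (1 - \<delta>) * 2"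
      using y0 spec[OF y0(2), of "- 1 / norm x"] nx by simp
    then have mm: "norm x * norm ((- 1 / norm x) *\<^sub>R x + y0) \<ge> norm x * ((1 - \<delta>) * 2)"
      by (rule mult_left_mono) (use nx in simp)
    have "norm x * ((1 - \<delta>) * 2) > 2 * norm x - \<epsilon>" using k by (simp add: algebra_simps)
    moreover have "y0 \<noteq> 0" using y0(1) by auto
    ultimately show ?thesis unfolding U_def using y0 p m pp mm by simp
  qed
  then obtain y where "y \<in> D" "y \<in> U" using dense_hit[OF cl oU] by blast
  then show ?thesis unfolding U_def by auto
qed

lemma oh_fwd:
  fixes D :: "'a::real_normed_vector set" and x :: "nat \<Rightarrow> 'a" and n :: nat
  assumes cl: "closure D = UNIV" and O: "OH TYPE('a)" and \<epsilon>: "\<epsilon> > 0" and xs: "\<forall>i<n. x i \<in> D"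
  shows "\<exists>y\<in>D. norm y \<noteq> 0 \<and>
                 (\<forall>i<n. norm (norm y *\<^sub>R x i + norm (x i) *\<^sub>R y) > norm y * (2 * norm (x i) - \<epsilon>))"
proof -
  define M where "M = (\<Sum>i<n. norm (x i))"
  have M0: "M \<ge> 0" unfolding M_def by (simp add: sum_nonneg)
  define \<delta> where "\<delta> = \<epsilon> / (2 * (M + 1))"
  have \<delta>: "\<delta> > 0" unfolding \<delta>_def using \<epsilon> M0 by (intro divide_pos_pos) auto
  define E where "E = span (x ` {..<n})"
  have sE: "subspace E \<and> (\<exists>B. finite B \<and> E = span B)"
  proof
    show "subspace E" unfolding E_def by (rule subspace_span)
    show "\<exists>B. finite B \<and> E = span B" unfolding E_def by (intro exI[of _ "x ` {..<n}"]) auto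
  qed
  have OH': "\<And>E e. e > 0 \<Longrightarrow> subspace E \<and> (\<exists>B. finite B \<and> E = span B) \<Longrightarrow>
      \<exists>y::'a. norm y = 1 \<and> (\<forall>z\<in>E. norm (z + y) \<ge> (1 - e) * (norm z + norm y))"
    using O unfolding OH_def by blast
  have "\<exists>y::'a. norm y = 1 \<and> (\<forall>z\<in>E. norm (z + y) \<ge> (1 - \<delta>) * (norm z + norm y))"
    using OH'[OF \<delta> sE] .
  then obtain y0 :: 'a where y0: "norm y0 = 1" "\<forall>z\<in>E. norm (z + y0) \<ge> (1 - \<delta>) * (norm z + norm y0)"
    by blast
  define U where "U = {y. norm y \<noteq> 0 \<and>
         (\<forall>i<n. norm y * (2 * norm (x i) - \<epsilon>) < norm (norm y *\<^sub>R x i + norm (x i) *\<^sub>R y))}"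
  have eqU: "U = {y. norm y \<noteq> 0} \<inter>
      (\<Inter>i\<in>{..<n}. {y. norm y * (2 * norm (x i) - \<epsilon>) < norm (norm y *\<^sub>R x i + norm (x i) *\<^sub>R y)})"
    unfolding U_def by auto
  have oU: "open U" unfolding eqU
    by (intro open_Int open_INT finite_lessThan ballI open_Collect_neq open_Collect_less continuous_intros)
  have "y0 \<in> U" unfolding U_def
  proof (intro CollectI conjI allI impI)
    show "norm y0 \<noteq> 0" using y0 by simp
    fix i assume i: "i < n"
    show "norm y0 * (2 * norm (x i) - \<epsilon>) < norm (norm y0 *\<^sub>R x i + norm (x i) *\<^sub>R y0)"
    proof (cases "x i = 0")
      case True then show ?thesis using y0 \<epsilon> by simp
    next
      case False
      then have nx: "norm (x i) > 0" by simp
      have aM: "norm (x i) \<le> M" unfolding M_def using i by (intro member_le_sum) auto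
      have k: "2 * \<delta> * norm (x i) < \<epsilon>" unfolding \<delta>_def using small_lem[OF \<epsilon> _ aM] by simp
      define z where "z = (1 / norm (x i)) *\<^sub>R x i"
      have zE: "z \<in> E" unfolding z_def E_def using i by (intro span_scale span_base) auto
      have nz: "norm z = 1" unfolding z_def using False by simp
      have "x i + norm (x i) *\<^sub>R y0 = norm (x i) *\<^sub>R (z + y0)" unfolding z_def using False
        by (simp add: algebra_simps)
      then have p: "norm (x i + norm (x i) *\<^sub>R y0) = norm (x i) * norm (z + y0)" by simp
      have "norm (z + y0) \<ge> (1 - \<delta>) * 2" using bspec[OF y0(2) zE] y0(1) nz by simp
      then have pp: "norm (x i) * norm (z + y0) \<ge> norm (x i) * ((1 - \<delta>) * 2)"
        by (rule mult_left_mono) (use nx in simp)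
      have "norm (x i) * ((1 - \<delta>) * 2) > 2 * norm (x i) - \<epsilon>" using k by (simp add: algebra_simps)
      then show ?thesis using y0 p pp by simp
    qed
  qed
  then obtain y where "y \<in> D" "y \<in> U" using dense_hit[OF cl oU] by blast
  then show ?thesis unfolding U_def by auto
qed


lemma loh_bwd:
  fixes D :: "'a::real_normed_vector set"
  assumes cl: "closure D = UNIV"
    and C: "\<forall>\<epsilon>>0. \<forall>x\<in>D. \<exists>y\<in>D. norm y \<noteq> 0 \<and>
              norm (norm y *\<^sub>R x - norm x *\<^sub>R y) > norm y * (2 * norm x - \<epsilon>) \<and>
              norm (norm y *\<^sub>R x + norm x *\<^sub>R y) > norm y * (2 * norm x - \<epsilon>)"
  shows "LOH TYPE('a)"
  unfolding LOH_def
proof (intro allI impI)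
  fix \<epsilon> :: real and x :: 'a
  assume \<epsilon>: "\<epsilon> > 0"
  show "\<exists>y::'a. norm y = 1 \<and> (\<forall>t::real. norm (t *\<^sub>R x + y) \<ge> (1 - \<epsilon>) * (\<bar>t\<bar> * norm x + norm y))"
  proof (cases "x = 0")
    case True
    have "D \<noteq> {}" using cl by auto
    then obtain d where "d \<in> D" by blast
    then obtain y where y: "y \<in> D" "norm y \<noteq> 0" using C by (meson zero_less_one)
    define v where "v = (1 / norm y) *\<^sub>R y"
    have nv: "norm v = 1" unfolding v_def using y by simp
    show ?thesis using True \<epsilon> nv by (intro exI[of _ v]) simp
  next
    case False
    then have nx: "norm x > 0" by simp
    define \<delta> where "\<delta> = min \<epsilon> 1 / 4"
    have \<delta>: "\<delta> > 0" "\<delta> \<le> 1/4" "2 * \<delta> \<le> \<epsilon> / 2" unfolding \<delta>_def using \<epsilon> by auto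
    obtain d where d: "d \<in> D" "norm (x - d) < \<delta> * norm x"
      using dense_near[OF cl, of "\<delta> * norm x" x] \<delta> nx by auto
    have "norm x - norm (x - d) \<le> norm d" using norm_triangle_ineq2[of x "x - d"] by simp
    then have nd: "norm d > (1 - \<delta>) * norm x" using d(2) by (simp add: algebra_simps)
    have "(1 - \<delta>) * norm x > 0" using \<delta> nx by simp
    then have d0: "d \<noteq> 0" using nd by auto
    then have ndp: "norm d > 0" by simp
    have epos: "\<epsilon> * norm d / 4 > 0" using \<epsilon> ndp by simp
    obtain y where y: "y \<in> D" "norm y \<noteq> 0"
        "norm (norm y *\<^sub>R d - norm d *\<^sub>R y) > norm y * (2 * norm d - \<epsilon> * norm d / 4)"
        "norm (norm y *\<^sub>R d + norm d *\<^sub>R y) > norm y * (2 * norm d - \<epsilon> * norm d / 4)"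
      using C epos d(1) by blast
    have y0: "y \<noteq> 0" using y(2) by simp
    define e where "e = (1 / norm d) *\<^sub>R d"
    define v where "v = (1 / norm y) *\<^sub>R y"
    define u where "u = (1 / norm x) *\<^sub>R x"
    have ne: "norm e = 1" unfolding e_def using d0 by simp
    have nme: "norm (- e) = 1" using ne by simp
    have nv: "norm v = 1" unfolding v_def using y0 by simp
    have ev: "norm (e + v) \<ge> 2 - \<epsilon> / 4"
      using scaled[OF y0 d0 y(4)] ndp unfolding e_def v_def by simp
    have "norm (norm y *\<^sub>R (- d) + norm (- d) *\<^sub>R y) = norm (norm y *\<^sub>R d - norm d *\<^sub>R y)"
      by (simp add: norm_minus_commute)
    then have y3: "norm (norm y *\<^sub>R (- d) + norm (- d) *\<^sub>R y) > norm y * (2 * norm (- d) - \<epsilon> * norm d / 4)"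
      using y(3) by simp
    have "- d \<noteq> 0" using d0 by simp
    from scaled[OF y0 this y3]
    have ev2: "norm ((- e) + v) \<ge> 2 - \<epsilon> / 4"
      using ndp unfolding e_def v_def by simp
    have "norm (u - e) \<le> 2 * norm (x - d) / norm x" unfolding u_def e_def by (rule normdiff[OF False d0])
    also have "\<dots> \<le> 2 * \<delta>" using d(2) nx by (simp add: field_simps)
    finally have ue: "norm (u - e) \<le> \<epsilon> / 2" using \<delta> by linarith
    have ue2: "norm ((- u) - (- e)) \<le> \<epsilon> / 2" using ue by (simp add: norm_minus_commute)
    have key: "norm (s *\<^sub>R w + v) \<ge> (1 - \<epsilon>) * (s + 1)"
      if s: "s \<ge> 0" and f1: "norm f = 1" and fv: "norm (f + v) \<ge> 2 - \<epsilon> / 4"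
        and wf: "norm (w - f) \<le> \<epsilon> / 2" for s w f
    proof -
      have a: "norm (s *\<^sub>R f + v) \<ge> (1 - \<epsilon> / 4) * (s + 1)"
        using lowA[OF f1 nv fv _ s] \<epsilon> by simp
      have b: "norm (s *\<^sub>R w + v) \<ge> norm (s *\<^sub>R f + v) - s * norm (w - f)" using pert[OF s] .
      have c: "s * norm (w - f) \<le> s * (\<epsilon> / 2)" using mult_left_mono[OF wf s] .
      have "0 \<le> \<epsilon> * s" using \<epsilon> s by simp
      then have d: "(1 - \<epsilon> / 4) * (s + 1) - s * (\<epsilon> / 2) \<ge> (1 - \<epsilon>) * (s + 1)"
        using \<epsilon> by (simp add: algebra_simps)
      show ?thesis using a b c d by linarith
    qed
    show ?thesis
    proof (intro exI[of _ v] conjI allI)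
      show "norm v = 1" by (rule nv)
      fix t :: real
      show "norm (t *\<^sub>R x + v) \<ge> (1 - \<epsilon>) * (\<bar>t\<bar> * norm x + norm v)"
      proof (cases "t \<ge> 0")
        case True
        have "t *\<^sub>R x = (t * norm x) *\<^sub>R u" unfolding u_def using nx by simp
        moreover have "t * norm x \<ge> 0" using True by simp
        ultimately show ?thesis using key[of "t * norm x" e u] ne ev ue nv True by simp
      next
        case False
        have "t *\<^sub>R x = (- t * norm x) *\<^sub>R (- u)" unfolding u_def using nx by simp
        moreover have "- t * norm x \<ge> 0" using False nx by (simp add: mult_nonpos_nonneg)
        ultimately show ?thesis using key[of "- t * norm x" "- e" "- u"] nme ev2 ue2 nv False by simp
      qed
    qed
  qed
qed

lemma oh_bwd:
  fixes D :: "'a::real_normed_vector set"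
  assumes cl: "closure D = UNIV"
    and C: "\<forall>\<epsilon>>0. \<forall>n::nat. \<forall>x::nat \<Rightarrow> 'a. (\<forall>i<n. x i \<in> D) \<longrightarrow>
              (\<exists>y\<in>D. norm y \<noteq> 0 \<and>
                 (\<forall>i<n. norm (norm y *\<^sub>R x i + norm (x i) *\<^sub>R y) > norm y * (2 * norm (x i) - \<epsilon>)))"
  shows "OH TYPE('a)"
  unfolding OH_def
proof (intro allI impI)
  fix E :: "'a set" and \<epsilon> :: real
  assume \<epsilon>: "\<epsilon> > 0" and E: "subspace E \<and> (\<exists>B. finite B \<and> E = span B)"
  then obtain B where B: "finite B" "E = span B" by blast
  define \<delta> where "\<delta> = min \<epsilon> 1 / 8"
  have \<delta>: "\<delta> > 0" "\<delta> \<le> 1/8" "2 * \<delta> \<le> \<epsilon> / 4" unfolding \<delta>_def using \<epsilon> by auto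
  define K where "K = span B \<inter> sphere (0::'a) 1"
  have KK: "K = (span B \<inter> cball 0 1) \<inter> {x. norm x = 1}" unfolding K_def by auto
  have cb: "compact (span B \<inter> cball (0::'a) 1)" by (rule fd_compact[OF B(1)])
  have clS: "closed {x::'a. norm x = 1}" by (intro closed_Collect_eq continuous_intros)
  have cK: "compact K" unfolding KK using compact_Int_closed[OF cb clS] .
  have cover: "K \<subseteq> (\<Union>d\<in>D. ball d \<delta>)"
  proof
    fix k assume "k \<in> K"
    obtain d where "d \<in> D" "norm (k - d) < \<delta>" using dense_near[OF cl \<delta>(1)] by blast
    then show "k \<in> (\<Union>d\<in>D. ball d \<delta>)" by (auto simp: dist_norm norm_minus_commute)
  qed
  obtain F where F: "F \<subseteq> D" "finite F" "K \<subseteq> (\<Union>d\<in>F. ball d \<delta>)"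
  proof -
    have ob: "\<And>T. T \<in> D \<Longrightarrow> open (ball T \<delta>)" by simp
    show ?thesis using compactE_image[OF cK ob cover] that by blast
  qed
  obtain n and xs :: "nat \<Rightarrow> 'a" where Fx: "F = xs ` {i. i < n}"
    using iffD1[OF finite_conv_nat_seg_image F(2)] by blast
  have xsD: "\<forall>i<n. xs i \<in> D" using F(1) Fx by auto
  have e4: "\<epsilon> / 4 > 0" using \<epsilon> by simp
  obtain y where y: "y \<in> D" "norm y \<noteq> 0"
      "\<forall>i<n. norm (norm y *\<^sub>R xs i + norm (xs i) *\<^sub>R y) > norm y * (2 * norm (xs i) - \<epsilon> / 4)"
    using C[rule_format, OF e4, of n xs] xsD by blast
  have y0: "y \<noteq> 0" using y(2) by simp
  define v where "v = (1 / norm y) *\<^sub>R y"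
  have nv: "norm v = 1" unfolding v_def using y0 by simp
  show "\<exists>y::'a. norm y = 1 \<and> (\<forall>x\<in>E. norm (x + y) \<ge> (1 - \<epsilon>) * (norm x + norm y))"
  proof (intro exI[of _ v] conjI ballI)
    show "norm v = 1" by (rule nv)
    fix z assume z: "z \<in> E"
    show "norm (z + v) \<ge> (1 - \<epsilon>) * (norm z + norm v)"
    proof (cases "z = 0")
      case True then show ?thesis using nv \<epsilon> by simp
    next
      case False
      then have nz: "norm z > 0" by simp
      define u where "u = (1 / norm z) *\<^sub>R z"
      have nu: "norm u = 1" unfolding u_def using False by simp
      have "u \<in> span B" unfolding u_def using z B(2) by (simp add: span_scale)
      then have "u \<in> K" unfolding K_def using nu by simp
      then obtain d where dF: "d \<in> F" and ud': "u \<in> ball d \<delta>" using F(3) by blast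
      then obtain i where i: "i < n" "d = xs i" using Fx by auto
      have ud: "norm (u - d) < \<delta>" using ud' by (simp add: dist_norm norm_minus_commute)
      have "norm u - norm (u - d) \<le> norm d"
        using norm_triangle_ineq2[of u "u - d"] by simp
      then have nd: "norm d \<ge> 3/4" using ud nu \<delta> by linarith
      then have d0: "d \<noteq> 0" by auto
      have ndp: "norm d > 0" using nd by linarith
      have u0: "u \<noteq> 0" using nu by auto
      define e where "e = (1 / norm d) *\<^sub>R d"
      have ne: "norm e = 1" unfolding e_def using d0 by simp
      have yi: "norm (norm y *\<^sub>R d + norm d *\<^sub>R y) > norm y * (2 * norm d - \<epsilon> / 4)"
        using y(3) i by simp
      have ev0: "norm (e + v) > 2 - (\<epsilon> / 4) / norm d"
        using scaled[OF y0 d0 yi] unfolding e_def v_def .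
      have "(\<epsilon> / 4) / norm d \<le> (\<epsilon> / 4) / (3/4)"
        using nd e4 by (intro divide_left_mono) auto
      then have ev: "norm (e + v) \<ge> 2 - \<epsilon> / 3" using ev0 by simp
      have "norm (u - e) \<le> 2 * norm (u - d) / norm u"
        using normdiff[OF u0 d0] nu unfolding e_def by simp
      then have ue: "norm (u - e) \<le> \<epsilon> / 4" using ud nu \<delta> by simp
      define s where "s = norm z"
      have s: "s \<ge> 0" unfolding s_def by simp
      have zu: "z = s *\<^sub>R u" unfolding s_def u_def using False by simp
      have a: "norm (s *\<^sub>R e + v) \<ge> (1 - \<epsilon> / 3) * (s + 1)"
        using lowA[OF ne nv ev _ s] \<epsilon> by simp
      have b: "norm (s *\<^sub>R u + v) \<ge> norm (s *\<^sub>R e + v) - s * norm (u - e)" using pert[OF s] .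
      have c: "s * norm (u - e) \<le> s * (\<epsilon> / 4)" using mult_left_mono[OF ue s] .
      have "0 \<le> \<epsilon> * s" using \<epsilon> s by simp
      then have dd: "(1 - \<epsilon> / 3) * (s + 1) - s * (\<epsilon> / 4) \<ge> (1 - \<epsilon>) * (s + 1)"
        using \<epsilon> by (simp add: algebra_simps)
      have "norm (z + v) \<ge> (1 - \<epsilon>) * (s + 1)" unfolding zu using a b c dd by linarith
      then show ?thesis using nv unfolding s_def by simp
    qed
  qed
qed


theorem lemma6p1:
  fixes D :: "'a::banach set"
  assumes "closure D = UNIV"
  shows "(LOH TYPE('a) \<longleftrightarrow>
           (\<forall>\<epsilon>>0. \<forall>x\<in>D. \<exists>y\<in>D. norm y \<noteq> 0 \<and>
              norm (norm y *\<^sub>R x - norm x *\<^sub>R y) > norm y * (2 * norm x - \<epsilon>) \<and>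
              norm (norm y *\<^sub>R x + norm x *\<^sub>R y) > norm y * (2 * norm x - \<epsilon>)))
       \<and> (OH TYPE('a) \<longleftrightarrow>
           (\<forall>\<epsilon>>0. \<forall>n::nat. \<forall>x::nat \<Rightarrow> 'a. (\<forall>i<n. x i \<in> D) \<longrightarrow>
              (\<exists>y\<in>D. norm y \<noteq> 0 \<and>
                 (\<forall>i<n. norm (norm y *\<^sub>R x i + norm (x i) *\<^sub>R y) > norm y * (2 * norm (x i) - \<epsilon>)))))"
  proof -
  have A: "(LOH TYPE('a) \<longleftrightarrow>
           (\<forall>\<epsilon>>0. \<forall>x\<in>D. \<exists>y\<in>D. norm y \<noteq> 0 \<and>
              norm (norm y *\<^sub>R x - norm x *\<^sub>R y) > norm y * (2 * norm x - \<epsilon>) \<and>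
              norm (norm y *\<^sub>R x + norm x *\<^sub>R y) > norm y * (2 * norm x - \<epsilon>)))"
  proof
    assume L: "LOH TYPE('a)"
    show "\<forall>\<epsilon>>0. \<forall>x\<in>D. \<exists>y\<in>D. norm y \<noteq> 0 \<and>
              norm (norm y *\<^sub>R x - norm x *\<^sub>R y) > norm y * (2 * norm x - \<epsilon>) \<and>
              norm (norm y *\<^sub>R x + norm x *\<^sub>R y) > norm y * (2 * norm x - \<epsilon>)"
      using loh_fwd[OF assms L] by blast
  next
    assume C: "\<forall>\<epsilon>>0. \<forall>x\<in>D. \<exists>y\<in>D. norm y \<noteq> 0 \<and>
              norm (norm y *\<^sub>R x - norm x *\<^sub>R y) > norm y * (2 * norm x - \<epsilon>) \<and>
              norm (norm y *\<^sub>R x + norm x *\<^sub>R y) > norm y * (2 * norm x - \<epsilon>)"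
    show "LOH TYPE('a)" by (rule loh_bwd[OF assms C])
  qed
  have B: "(OH TYPE('a) \<longleftrightarrow>
           (\<forall>\<epsilon>>0. \<forall>n::nat. \<forall>x::nat \<Rightarrow> 'a. (\<forall>i<n. x i \<in> D) \<longrightarrow>
              (\<exists>y\<in>D. norm y \<noteq> 0 \<and>
                 (\<forall>i<n. norm (norm y *\<^sub>R x i + norm (x i) *\<^sub>R y) > norm y * (2 * norm (x i) - \<epsilon>)))))"
  proof
    assume O: "OH TYPE('a)"
    show "\<forall>\<epsilon>>0. \<forall>n::nat. \<forall>x::nat \<Rightarrow> 'a. (\<forall>i<n. x i \<in> D) \<longrightarrow>
              (\<exists>y\<in>D. norm y \<noteq> 0 \<and>
                 (\<forall>i<n. norm (norm y *\<^sub>R x i + norm (x i) *\<^sub>R y) > norm y * (2 * norm (x i) - \<epsilon>)))"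
    proof (intro allI impI)
      fix \<epsilon> :: real and n :: nat and x :: "nat \<Rightarrow> 'a"
      assume "\<epsilon> > 0" "\<forall>i<n. x i \<in> D"
      then show "\<exists>y\<in>D. norm y \<noteq> 0 \<and>
                 (\<forall>i<n. norm (norm y *\<^sub>R x i + norm (x i) *\<^sub>R y) > norm y * (2 * norm (x i) - \<epsilon>))"
        using oh_fwd[OF assms O] by blast
    qed
  next
    assume C: "\<forall>\<epsilon>>0. \<forall>n::nat. \<forall>x::nat \<Rightarrow> 'a. (\<forall>i<n. x i \<in> D) \<longrightarrow>
              (\<exists>y\<in>D. norm y \<noteq> 0 \<and>
                 (\<forall>i<n. norm (norm y *\<^sub>R x i + norm (x i) *\<^sub>R y) > norm y * (2 * norm (x i) - \<epsilon>)))"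
    show "OH TYPE('a)" by (rule oh_bwd[OF assms C])
  qed
  show ?thesis using A B by blast
qed

end
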